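(* Let $(X,d)$ be a compact metric space and $F$ a semiflow on $X$. For all $x,y\in X$, if $x\succcurlyeq_{\mathcal C} y$ then $x\succcurlyeq_{\mathcal S} y$. In particular $\mathcal R_{\mathcal C}\subset\mathcal R_{\mathcal S}$.
   Context: A semiflow on a metric space $(X,d)$ is a continuous map $F:[0,\infty)\times X\to X$, $(t,x)\mapsto F^t(x)$, with $F^0=\mathrm{id}$ and $F^{t+s}=F^t\circ F^s$ for all $t,s\ge0$. A curve is piecewise continuous if it is continuous except at finitely many points, at which one-sided limits exist. Conley chains: for $\varepsilon>0$, $T>0$, an $(\varepsilon,T)$-chain from $x$ to $y$ is a finite sequence $x=x_0,\dots,x_N=y$ in $X$ with times $t_i\ge T$ such that $d(F^{t_i}(x_i),x_{i+1})<\varepsilon$ for $i=0,\dots,N-1$. Write $x\succcurlyeq_{\mathcal C} y$ if for every $\varepsilon>0$ and $T>0$ there is an $(\varepsilon,T)$-chain from $x$ to $y$. Shadow chains: for $T\ge1$, a piecewise continuous $\gamma:[0,T]\to X$ is $\varepsilon$-close to $F$ if $d(\gamma(t+\tau),F^\tau(\gamma(t)))<\varepsilon$ for every $\tau\in[0,1]$ and $t\in[0,T-\tau]$. An $\varepsilon$-chain from $x$ to $y$ is such a $\gamma$ with $\gamma(0)=x$, $\gamma(T)=y$. Write $x\succcurlyeq_{\mathcal S} y$ if for every $\varepsilon>0$ there is an $\varepsilon$-chain from $x$ to $y$. For $\star\in\{\mathcal C,\mathcal S\}$: $x$ is $\star$-chain-recurrent if $x$ is a fixed point of $F$ or there is $y$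 with $x\succcurlyeq_\star y$ and $y\succcurlyeq_\star x$; $\mathcal R_\star$ denotes the set of $\star$-chain-recurrent points. *)

theory Defs
  imports "HOL-Analysis.Analysis"
begin

definition semiflow :: "'a::metric_space set \<Rightarrow> (real \<Rightarrow> 'a \<Rightarrow> 'a) \<Rightarrow> bool" where
  "semiflow X F \<longleftrightarrow>
     continuous_on ({0..} \<times> X) (\<lambda>(t, x). F t x) \<and>
     (\<forall>t\<ge>0. \<forall>x\<in>X. F t x \<in> X) \<and>
     (\<forall>x\<in>X. F 0 x = x) \<and>
     (\<forall>t\<ge>0. \<forall>s\<ge>0. \<forall>x\<in>X. F (t + s) x = F t (F s x))"

definition conley_chain ::
  "'a::metric_space set \<Rightarrow> (real \<Rightarrow> 'a \<Rightarrow> 'a) \<Rightarrow> real \<Rightarrow> real \<Rightarrow> 'a \<Rightarrow> 'a \<Rightarrow> bool" where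
  "conley_chain X F \<epsilon> T x y \<longleftrightarrow>
     (\<exists>N::nat. \<exists>xs::nat \<Rightarrow> 'a. \<exists>ts::nat \<Rightarrow> real.
        N \<ge> 1 \<and> xs 0 = x \<and> xs N = y \<and> (\<forall>i\<le>N. xs i \<in> X) \<and>
        (\<forall>i<N. ts i \<ge> T \<and> dist (F (ts i) (xs i)) (xs (Suc i)) < \<epsilon>))"

definition conley_rel :: "'a::metric_space set \<Rightarrow> (real \<Rightarrow> 'a \<Rightarrow> 'a) \<Rightarrow> 'a \<Rightarrow> 'a \<Rightarrow> bool" where
  "conley_rel X F x y \<longleftrightarrow> (\<forall>\<epsilon>>0. \<forall>T>0. conley_chain X F \<epsilon> T x y)"

definition piecewise_cont_curve :: "'a::metric_space set \<Rightarrow> real \<Rightarrow> (real \<Rightarrow> 'a) \<Rightarrow> bool" where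
  "piecewise_cont_curve X T \<gamma> \<longleftrightarrow>
     (\<forall>t\<in>{0..T}. \<gamma> t \<in> X) \<and>
     (\<exists>S. finite S \<and>
        (\<forall>t\<in>{0..T} - S. continuous (at t within {0..T}) \<gamma>) \<and>
        (\<forall>s\<in>S \<inter> {0..T}.
           (0 < s \<longrightarrow> (\<exists>l. (\<gamma> \<longlongrightarrow> l) (at_left s))) \<and>
           (s < T \<longrightarrow> (\<exists>l. (\<gamma> \<longlongrightarrow> l) (at_right s)))))"

definition eps_close :: "(real \<Rightarrow> 'a \<Rightarrow> 'a::metric_space) \<Rightarrow> real \<Rightarrow> real \<Rightarrow> (real \<Rightarrow> 'a) \<Rightarrow> bool" where
  "eps_close F \<epsilon> T \<gamma> \<longleftrightarrow>
     (\<forall>\<tau>\<in>{0..1}. \<forall>t\<in>{0..T - \<tau>}. dist (\<gamma> (t + \<tau>)) (F \<tau> (\<gamma> t)) < \<epsilon>)"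

definition shadow_chain ::
  "'a::metric_space set \<Rightarrow> (real \<Rightarrow> 'a \<Rightarrow> 'a) \<Rightarrow> real \<Rightarrow> 'a \<Rightarrow> 'a \<Rightarrow> bool" where
  "shadow_chain X F \<epsilon> x y \<longleftrightarrow>
     (\<exists>T \<gamma>. T \<ge> 1 \<and> piecewise_cont_curve X T \<gamma> \<and> eps_close F \<epsilon> T \<gamma> \<and>
            \<gamma> 0 = x \<and> \<gamma> T = y)"

definition shadow_rel :: "'a::metric_space set \<Rightarrow> (real \<Rightarrow> 'a \<Rightarrow> 'a) \<Rightarrow> 'a \<Rightarrow> 'a \<Rightarrow> bool" where
  "shadow_rel X F x y \<longleftrightarrow> (\<forall>\<epsilon>>0. shadow_chain X F \<epsilon> x y)"

definition fixed_point :: "(real \<Rightarrow> 'a \<Rightarrow> 'a) \<Rightarrow> 'a \<Rightarrow> bool" where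
  "fixed_point F x \<longleftrightarrow> (\<forall>t\<ge>0. F t x = x)"

definition chain_recurrent_set ::
  "'a set \<Rightarrow> (real \<Rightarrow> 'a \<Rightarrow> 'a) \<Rightarrow> ('a \<Rightarrow> 'a \<Rightarrow> bool) \<Rightarrow> 'a set" where
  "chain_recurrent_set X F R = {x\<in>X. fixed_point F x \<or> (\<exists>y\<in>X. R x y \<and> R y x)}"

end

theory Submission
  imports Defs
begin

lemma my_filtermap_at_left_shift: "filtermap (\<lambda>x. x - d) (at_left a) = at_left (a - d)"
  for a d :: "real"
  by (simp add: filter_eq_iff eventually_filtermap eventually_at_filter filtermap_nhds_shift[symmetric])

lemma shift_left:
  fixes g :: "real \<Rightarrow> 'a::metric_space"
  assumes "(g \<longlongrightarrow> l) (at_left s)"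
  shows "((\<lambda>t. g (t - c)) \<longlongrightarrow> l) (at_left (c + s))"
proof -
  have "filtermap (\<lambda>x. x - c) (at_left (c + s)) = at_left s"
    using my_filtermap_at_left_shift[of c "c+s"] by simp
  then have "filterlim (\<lambda>x. x - c) (at_left s) (at_left (c + s))"
    by (simp add: filterlim_def)
  from filterlim_compose[OF assms this] show ?thesis by (simp add: o_def)
qed

lemma shift_right:
  fixes g :: "real \<Rightarrow> 'a::metric_space"
  assumes "(g \<longlongrightarrow> l) (at_right s)"
  shows "((\<lambda>t. g (t - c)) \<longlongrightarrow> l) (at_right (c + s))"
proof -
  have "filtermap (\<lambda>x. x - c) (at_right (c + s)) = at_right s"
    using filtermap_at_right_shift[of c "c+s"] by simp
  then have "filterlim (\<lambda>x. x - c) (at_right s) (at_right (c + s))"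
    by (simp add: filterlim_def)
  from filterlim_compose[OF assms this] show ?thesis by (simp add: o_def)
qed

lemma semiflow_cont_t:
  assumes "semiflow X F" "x \<in> X"
  shows "continuous_on {0..} (\<lambda>t. F t x)"
proof -
  have c: "continuous_on ({0..} \<times> X) (\<lambda>(t, x). F t x)"
    using assms(1) by (simp add: semiflow_def)
  have "continuous_on {0..} ((\<lambda>(t, x). F t x) \<circ> (\<lambda>t. (t, x)))"
    by (rule continuous_on_compose) (auto intro!: continuous_intros continuous_on_subset[OF c] simp: assms(2))
  then show ?thesis by (simp add: o_def)
qed

lemma F_lim_right:
  assumes "semiflow X F" "x \<in> X" "s \<ge> 0"
  shows "((\<lambda>u. F u x) \<longlongrightarrow> F s x) (at_right s)"
proof -
  have "((\<lambda>u. F u x) \<longlongrightarrow> F s x) (at s within {0..})"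
    using semiflow_cont_t[OF assms(1,2)] assms(3) by (simp add: continuous_on_def)
  then show ?thesis by (rule tendsto_within_subset) (use assms(3) in auto)
qed

lemma F_lim_left:
  assumes "semiflow X F" "x \<in> X" "s > 0"
  shows "((\<lambda>u. F u x) \<longlongrightarrow> F s x) (at_left s)"
proof -
  have "((\<lambda>u. F u x) \<longlongrightarrow> F s x) (at s within {0..})"
    using semiflow_cont_t[OF assms(1,2)] assms(3) by (simp add: continuous_on_def)
  then have "((\<lambda>u. F u x) \<longlongrightarrow> F s x) (at s within {0..s})"
    by (rule tendsto_within_subset) auto
  then show ?thesis using at_within_Icc_at_left[of 0 s] assms(3) by simp
qed

definition pc :: "'a::metric_space set \<Rightarrow> real \<Rightarrow> (real \<Rightarrow> 'a) \<Rightarrow> real set \<Rightarrow> bool" where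
  "pc X T \<gamma> S \<longleftrightarrow> finite S \<and> S \<subseteq> {0..T} \<and> 0 \<in> S \<and> T \<in> S \<and> (\<forall>t\<in>{0..T}. \<gamma> t \<in> X) \<and>
     (\<forall>t\<in>{0<..<T} - S. isCont \<gamma> t) \<and>
     (\<forall>s\<in>S. (0 < s \<longrightarrow> (\<exists>l. (\<gamma> \<longlongrightarrow> l) (at_left s))) \<and>
             (s < T \<longrightarrow> (\<exists>l. (\<gamma> \<longlongrightarrow> l) (at_right s))))"

lemma pc_imp:
  assumes "pc X T \<gamma> S"
  shows "piecewise_cont_curve X T \<gamma>"
  unfolding piecewise_cont_curve_def
proof (intro conjI exI[of _ S])
  show "\<forall>t\<in>{0..T}. \<gamma> t \<in> X" "finite S" using assms by (auto simp: pc_def)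
  show "\<forall>t\<in>{0..T} - S. continuous (at t within {0..T}) \<gamma>"
  proof
    fix t assume t: "t \<in> {0..T} - S"
    then have "t \<in> {0<..<T} - S" using assms unfolding pc_def
      by (metis DiffD1 DiffD2 DiffI atLeastAtMost_iff greaterThanLessThan_iff order_less_le)
    then have "isCont \<gamma> t" using assms by (auto simp: pc_def)
    then show "continuous (at t within {0..T}) \<gamma>"
      using continuous_at_imp_continuous_at_within by blast
  qed
  show "\<forall>s\<in>S \<inter> {0..T}.
           (0 < s \<longrightarrow> (\<exists>l. (\<gamma> \<longlongrightarrow> l) (at_left s))) \<and>
           (s < T \<longrightarrow> (\<exists>l. (\<gamma> \<longlongrightarrow> l) (at_right s)))"
    using assms by (auto simp: pc_def)
qed


lemma chain_to_curve:
  fixes X :: "'a::metric_space set" and F :: "real \<Rightarrow> 'a \<Rightarrow> 'a"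
  assumes sf: "semiflow X F" and ep: "\<epsilon> > 0"
    and uc: "\<forall>\<sigma>\<in>{0..1}. \<forall>a\<in>X. \<forall>b\<in>X. dist a b < \<delta> \<longrightarrow> dist (F \<sigma> a) (F \<sigma> b) < \<epsilon>"
  shows "\<forall>xs ts. (\<forall>i\<le>n. xs i \<in> X) \<and> (\<forall>i<n. ts i \<ge> 1 \<and> dist (F (ts i) (xs i)) (xs (Suc i)) < \<delta>) \<longrightarrow>
    (\<exists>T \<gamma> S. T \<ge> real n \<and> pc X T \<gamma> S \<and> eps_close F \<epsilon> T \<gamma> \<and> \<gamma> 0 = xs 0 \<and> \<gamma> T = xs n \<and>
       (\<forall>\<sigma>. 0 \<le> \<sigma> \<and> \<sigma> < 1 \<and> \<sigma> \<le> T \<longrightarrow> \<gamma> \<sigma> = F \<sigma> (\<gamma> 0)))"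
proof (induction n)
  have FX: "\<And>t x. t \<ge> 0 \<Longrightarrow> x \<in> X \<Longrightarrow> F t x \<in> X" and F0: "\<And>x. x \<in> X \<Longrightarrow> F 0 x = x"
    using sf by (auto simp: semiflow_def)
  case 0
  show ?case
  proof (intro allI impI)
    fix xs :: "nat \<Rightarrow> 'a" and ts :: "nat \<Rightarrow> real"
    assume a: "(\<forall>i\<le>0. xs i \<in> X) \<and> (\<forall>i<0. ts i \<ge> 1 \<and> dist (F (ts i) (xs i)) (xs (Suc i)) < \<delta>)"
    then have x: "xs 0 \<in> X" by simp
    show "\<exists>T \<gamma> S. T \<ge> real 0 \<and> pc X T \<gamma> S \<and> eps_close F \<epsilon> T \<gamma> \<and> \<gamma> 0 = xs 0 \<and> \<gamma> T = xs 0 \<and>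
       (\<forall>\<sigma>. 0 \<le> \<sigma> \<and> \<sigma> < 1 \<and> \<sigma> \<le> T \<longrightarrow> \<gamma> \<sigma> = F \<sigma> (\<gamma> 0))"
    proof (rule exI[of _ "0::real"], rule exI[of _ "\<lambda>_. xs 0"], rule exI[of _ "{0::real}"], intro conjI)
      show "pc X 0 (\<lambda>_. xs 0) {0}" using x by (auto simp: pc_def)
      show "eps_close F \<epsilon> 0 (\<lambda>_. xs 0)" unfolding eps_close_def
      proof (intro ballI)
        fix \<tau> t :: real assume "\<tau> \<in> {0..1}" "t \<in> {0..0 - \<tau>}"
        then have "\<tau> = 0" by auto
        then show "dist (xs 0) (F \<tau> (xs 0)) < \<epsilon>" using x F0 ep by simp
      qed
      show "\<forall>\<sigma>. 0 \<le> \<sigma> \<and> \<sigma> < 1 \<and> \<sigma> \<le> 0 \<longrightarrow> xs 0 = F \<sigma> (xs 0)" using x F0 by auto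
    qed auto
  qed
next
  have FX: "\<And>t x. t \<ge> 0 \<Longrightarrow> x \<in> X \<Longrightarrow> F t x \<in> X" and F0: "\<And>x. x \<in> X \<Longrightarrow> F 0 x = x"
    and Fadd: "\<And>t s x. t \<ge> 0 \<Longrightarrow> s \<ge> 0 \<Longrightarrow> x \<in> X \<Longrightarrow> F (t + s) x = F t (F s x)"
    using sf by (auto simp: semiflow_def)
  case (Suc n)
  show ?case
  proof (intro allI impI)
    fix xs :: "nat \<Rightarrow> 'a" and ts :: "nat \<Rightarrow> real"
    assume a: "(\<forall>i\<le>Suc n. xs i \<in> X) \<and> (\<forall>i<Suc n. ts i \<ge> 1 \<and> dist (F (ts i) (xs i)) (xs (Suc i)) < \<delta>)"
    define t0 where "t0 = ts 0"
    define x0 where "x0 = xs 0"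
    have aX: "\<And>i. i \<le> Suc n \<Longrightarrow> xs i \<in> X" using a by blast
    have aT: "\<And>i. i < Suc n \<Longrightarrow> ts i \<ge> 1 \<and> dist (F (ts i) (xs i)) (xs (Suc i)) < \<delta>" using a by blast
    have x0X: "x0 \<in> X" using aX[of 0] by (simp add: x0_def)
    have x1X: "xs 1 \<in> X" using aX[of 1] by simp
    have t0: "t0 \<ge> 1" using aT[of 0] by (simp add: t0_def)
    have d0: "dist (F t0 x0) (xs 1) < \<delta>" using aT[of 0] by (simp add: t0_def x0_def)
    have "(\<forall>i\<le>n. xs (Suc i) \<in> X) \<and> (\<forall>i<n. ts (Suc i) \<ge> 1 \<and> dist (F (ts (Suc i)) (xs (Suc i))) (xs (Suc (Suc i))) < \<delta>)"
    proof (intro conjI allI impI)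
      fix i assume "i \<le> n" then show "xs (Suc i) \<in> X" using aX[of "Suc i"] by simp
    next
      fix i assume "i < n" then show "ts (Suc i) \<ge> 1" using aT[of "Suc i"] by simp
    next
      fix i assume "i < n" then show "dist (F (ts (Suc i)) (xs (Suc i))) (xs (Suc (Suc i))) < \<delta>" using aT[of "Suc i"] by simp
    qed
    from Suc.IH[rule_format, OF this] obtain T' \<gamma>' S' where T': "T' \<ge> real n" and pc': "pc X T' \<gamma>' S'" and ec': "eps_close F \<epsilon> T' \<gamma>'"
      and g0: "\<gamma>' 0 = xs 1" and gT: "\<gamma>' T' = xs (Suc n)"
      and ex': "\<forall>\<sigma>. 0 \<le> \<sigma> \<and> \<sigma> < 1 \<and> \<sigma> \<le> T' \<longrightarrow> \<gamma>' \<sigma> = F \<sigma> (xs 1)"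
      by (metis One_nat_def)
    define \<gamma> where "\<gamma> t = (if t < t0 then F t x0 else \<gamma>' (t - t0))" for t
    define T where "T = t0 + T'"
    define S where "S = insert 0 ((\<lambda>s. t0 + s) ` S')"
    have T'0: "T' \<ge> 0" using T' by simp
    have ec: "eps_close F \<epsilon> T \<gamma>" unfolding eps_close_def
    proof (intro ballI)
      fix \<tau> t :: real assume \<tau>: "\<tau> \<in> {0..1}" and t: "t \<in> {0..T - \<tau>}"
      show "dist (\<gamma> (t + \<tau>)) (F \<tau> (\<gamma> t)) < \<epsilon>"
      proof (cases "t + \<tau> < t0")
        case True
        then have "t < t0" using \<tau> by simp
        then have "\<gamma> (t + \<tau>) = F \<tau> (\<gamma> t)" using \<open>t + \<tau> < t0\<close> \<tau> t x0X Fadd[of \<tau> t x0]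
          by (simp add: \<gamma>_def add.commute[of t \<tau>])
        then show ?thesis using ep by simp
      next
        case False
        show ?thesis
        proof (cases "t \<ge> t0")
          case True
          have "t - t0 \<in> {0..T' - \<tau>}" using t True by (auto simp: T_def)
          then have "dist (\<gamma>' (t - t0 + \<tau>)) (F \<tau> (\<gamma>' (t - t0))) < \<epsilon>"
            using ec' \<tau> by (auto simp: eps_close_def)
          moreover have "\<gamma> (t + \<tau>) = \<gamma>' (t - t0 + \<tau>)" "\<gamma> t = \<gamma>' (t - t0)"
            using True \<tau> by (auto simp: \<gamma>_def algebra_simps)
          ultimately show ?thesis by simp
        next
          case tl: False
          define \<sigma> where "\<sigma> = t + \<tau> - t0"
          have s0: "0 \<le> \<sigma>" "\<sigma> < 1" "\<sigma> \<le> T'" using False tl t \<tau> by (auto simp: \<sigma>_def T_def)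
          have "\<gamma> (t + \<tau>) = F \<sigma> (xs 1)" using False ex' s0 by (simp add: \<gamma>_def \<sigma>_def)
          moreover have "F \<tau> (\<gamma> t) = F \<sigma> (F t0 x0)"
          proof -
            have "F \<tau> (\<gamma> t) = F \<tau> (F t x0)" using tl by (simp add: \<gamma>_def)
            also have "\<dots> = F (\<tau> + t) x0" using Fadd[of \<tau> t x0] \<tau> t x0X by simp
            also have "\<dots> = F (\<sigma> + t0) x0" by (simp add: \<sigma>_def add.commute)
            also have "\<dots> = F \<sigma> (F t0 x0)" using Fadd[of \<sigma> t0 x0] s0 t0 x0X by simp
            finally show ?thesis .
          qed
          moreover have "dist (F \<sigma> (F t0 x0)) (F \<sigma> (xs 1)) < \<epsilon>"
          proof -
            have "F t0 x0 \<in> X" using FX[of t0 x0] t0 x0X by simp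
            moreover have "\<sigma> \<in> {0..1}" using s0 by simp
            ultimately show ?thesis using uc x1X d0 by blast
          qed
          ultimately show ?thesis by (simp add: dist_commute)
        qed
      qed
    qed
    have pc: "pc X T \<gamma> S"
      unfolding pc_def
    proof (intro conjI)
      have fS': "finite S'" and sub': "S' \<subseteq> {0..T'}" and S'0: "0 \<in> S'" and S'T: "T' \<in> S'"
        and vX': "\<forall>t\<in>{0..T'}. \<gamma>' t \<in> X"
        and ic': "\<forall>t\<in>{0<..<T'} - S'. isCont \<gamma>' t"
        and lim': "\<forall>s\<in>S'. (0 < s \<longrightarrow> (\<exists>l. (\<gamma>' \<longlongrightarrow> l) (at_left s))) \<and>
             (s < T' \<longrightarrow> (\<exists>l. (\<gamma>' \<longlongrightarrow> l) (at_right s)))"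
        using pc' unfolding pc_def by blast+
      show "finite S" using fS' by (simp add: S_def)
      show "S \<subseteq> {0..T}" using sub' t0 T'0 by (auto simp: S_def T_def)
      show "0 \<in> S" by (simp add: S_def)
      show "T \<in> S" using S'T by (simp add: S_def T_def)
      show "\<forall>t\<in>{0..T}. \<gamma> t \<in> X"
      proof
        fix t assume t: "t \<in> {0..T}"
        show "\<gamma> t \<in> X"
        proof (cases "t < t0")
          case True then show ?thesis using FX[of t x0] x0X t by (simp add: \<gamma>_def)
        next
          case False then show ?thesis using vX' t by (simp add: \<gamma>_def T_def)
        qed
      qed
      show "\<forall>t\<in>{0<..<T} - S. isCont \<gamma> t"
      proof
        fix t assume t: "t \<in> {0<..<T} - S"
        consider "t < t0" | "t = t0" | "t > t0" by linarith
        then show "isCont \<gamma> t"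
        proof cases
          case 1
          have ev: "eventually (\<lambda>u. u \<in> {..<t0}) (nhds t)"
            by (rule eventually_nhds_in_open) (use 1 in auto)
          have "isCont (\<lambda>u. F u x0) t"
            using continuous_on_interior[OF semiflow_cont_t[OF sf x0X], of t] t by simp
          moreover have "eventually (\<lambda>u. F u x0 = \<gamma> u) (nhds t)"
            using ev by (rule eventually_mono) (simp add: \<gamma>_def)
          ultimately show ?thesis by (metis isCont_cong)
        next
          case 2
          then have "t \<in> S" using S'0 by (simp add: S_def)
          then show ?thesis using t by simp
        next
          case 3
          have ev: "eventually (\<lambda>u. u \<in> {t0<..}) (nhds t)"
            by (rule eventually_nhds_in_open) (use 3 in auto)
          have "t - t0 \<notin> S'"
          proof
            assume "t - t0 \<in> S'"
            then have "t0 + (t - t0) \<in> S" unfolding S_def by blast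
            then show False using t by simp
          qed
          moreover have "t - t0 \<in> {0<..<T'}" using t 3 by (auto simp: T_def)
          ultimately have "isCont \<gamma>' (t - t0)" using ic' by blast
          then have "isCont (\<lambda>u. \<gamma>' (u - t0)) t"
            by (intro isCont_o2[where g = \<gamma>' and f = "\<lambda>u. u - t0"]) (auto intro!: continuous_intros)
          moreover have "eventually (\<lambda>u. \<gamma>' (u - t0) = \<gamma> u) (nhds t)"
            using ev by (rule eventually_mono) (simp add: \<gamma>_def)
          ultimately show ?thesis by (metis isCont_cong)
        qed
      qed
      show "\<forall>s\<in>S. (0 < s \<longrightarrow> (\<exists>l. (\<gamma> \<longlongrightarrow> l) (at_left s))) \<and> (s < T \<longrightarrow> (\<exists>l. (\<gamma> \<longlongrightarrow> l) (at_right s)))"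
      proof
        fix s assume sS: "s \<in> S"
        show "(0 < s \<longrightarrow> (\<exists>l. (\<gamma> \<longlongrightarrow> l) (at_left s))) \<and> (s < T \<longrightarrow> (\<exists>l. (\<gamma> \<longlongrightarrow> l) (at_right s)))"
        proof (cases "s = 0")
          case True
          have "((\<lambda>u. F u x0) \<longlongrightarrow> F 0 x0) (at_right 0)" by (rule F_lim_right[OF sf x0X]) simp
          moreover have "eventually (\<lambda>u. F u x0 = \<gamma> u) (at_right 0)"
            using eventually_at_right_real[of 0 t0] t0  by (auto elim!: eventually_mono simp: \<gamma>_def)
          ultimately have "(\<gamma> \<longlongrightarrow> F 0 x0) (at_right 0)" by (rule Lim_transform_eventually)
          then show ?thesis using True by blast
        next
          case False
          then obtain s' where s': "s' \<in> S'" "s = t0 + s'" using sS by (auto simp: S_def)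
          have s'r: "0 \<le> s'" "s' \<le> T'" using s' sub' by auto
          have L: "\<exists>l. (\<gamma> \<longlongrightarrow> l) (at_left s)"
          proof (cases "s' = 0")
            case True
            have "((\<lambda>u. F u x0) \<longlongrightarrow> F t0 x0) (at_left t0)" by (rule F_lim_left[OF sf x0X]) (use t0 in simp)
            moreover have "eventually (\<lambda>u. F u x0 = \<gamma> u) (at_left t0)"
              using eventually_at_left_real[of 0 t0] t0  by (auto elim!: eventually_mono simp: \<gamma>_def)
            ultimately have "(\<gamma> \<longlongrightarrow> F t0 x0) (at_left t0)" by (rule Lim_transform_eventually)
            then show ?thesis using True s' by auto
          next
            case False
            then have "0 < s'" using s'r by simp
            then obtain l where l: "(\<gamma>' \<longlongrightarrow> l) (at_left s')" using lim' s' by blast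
            have "((\<lambda>u. \<gamma>' (u - t0)) \<longlongrightarrow> l) (at_left (t0 + s'))" by (rule shift_left[OF l])
            moreover have "eventually (\<lambda>u. \<gamma>' (u - t0) = \<gamma> u) (at_left (t0 + s'))"
              using eventually_at_left_real[of t0 "t0 + s'"] \<open>0 < s'\<close> by (auto elim!: eventually_mono simp: \<gamma>_def)
            ultimately have "(\<gamma> \<longlongrightarrow> l) (at_left (t0 + s'))" by (rule Lim_transform_eventually)
            then show ?thesis using s' by auto
          qed
          have R: "s < T \<Longrightarrow> \<exists>l. (\<gamma> \<longlongrightarrow> l) (at_right s)"
          proof -
            assume "s < T"
            then have "s' < T'" using s' by (simp add: T_def)
            then obtain l where l: "(\<gamma>' \<longlongrightarrow> l) (at_right s')" using lim' s' by blast
            have "((\<lambda>u. \<gamma>' (u - t0)) \<longlongrightarrow> l) (at_right (t0 + s'))" by (rule shift_right[OF l])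
            moreover have "eventually (\<lambda>u. \<gamma>' (u - t0) = \<gamma> u) (at_right (t0 + s'))"
              using eventually_at_right_real[of "t0 + s'" "t0 + s' + 1"] s'r by (auto elim!: eventually_mono simp: \<gamma>_def)
            ultimately have "(\<gamma> \<longlongrightarrow> l) (at_right (t0 + s'))" by (rule Lim_transform_eventually)
            then show ?thesis using s' by auto
          qed
          show ?thesis using L R by blast
        qed
      qed
    qed
    show "\<exists>T \<gamma> S. T \<ge> real (Suc n) \<and> pc X T \<gamma> S \<and> eps_close F \<epsilon> T \<gamma> \<and> \<gamma> 0 = xs 0 \<and> \<gamma> T = xs (Suc n) \<and>
       (\<forall>\<sigma>. 0 \<le> \<sigma> \<and> \<sigma> < 1 \<and> \<sigma> \<le> T \<longrightarrow> \<gamma> \<sigma> = F \<sigma> (\<gamma> 0))"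
    proof (rule exI[of _ T], rule exI[of _ \<gamma>], rule exI[of _ S], intro conjI pc ec)
      show "real (Suc n) \<le> T" using T' t0 by (simp add: T_def)
      show "\<gamma> 0 = xs 0" using t0 x0X F0 by (simp add: \<gamma>_def x0_def)
      show "\<gamma> T = xs (Suc n)" using T'0 gT by (simp add: \<gamma>_def T_def)
      show "\<forall>\<sigma>. 0 \<le> \<sigma> \<and> \<sigma> < 1 \<and> \<sigma> \<le> T \<longrightarrow> \<gamma> \<sigma> = F \<sigma> (\<gamma> 0)"
        using t0 x0X F0 by (simp add: \<gamma>_def)
    qed
  qed
qed

theorem proposition3p2:
  fixes X :: "'a::metric_space set" and F :: "real \<Rightarrow> 'a \<Rightarrow> 'a"
  assumes "compact X" and "semiflow X F"
  shows "(\<forall>x\<in>X. \<forall>y\<in>X. conley_rel X F x y \<longrightarrow> shadow_rel X F x y) \<and>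
         chain_recurrent_set X F (conley_rel X F) \<subseteq> chain_recurrent_set X F (shadow_rel X F)"
proof -
  have P1: "\<forall>x\<in>X. \<forall>y\<in>X. conley_rel X F x y \<longrightarrow> shadow_rel X F x y"
  proof (intro ballI impI)
    fix x y assume "x \<in> X" "y \<in> X" and cr: "conley_rel X F x y"
    show "shadow_rel X F x y" unfolding shadow_rel_def
    proof (intro allI impI)
      fix \<epsilon> :: real assume ep: "\<epsilon> > 0"
      have c: "continuous_on ({0..} \<times> X) (\<lambda>(t, x). F t x)"
        using assms(2) by (simp add: semiflow_def)
      have "uniformly_continuous_on ({0..1} \<times> X) (\<lambda>(t, x). F t x)"
        by (rule compact_uniformly_continuous)
          (auto intro: continuous_on_subset[OF c] compact_Times assms(1))
      then obtain \<delta> where d: "\<delta> > 0" and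
        dd: "\<forall>p\<in>{0..1} \<times> X. \<forall>p'\<in>{0..1} \<times> X. dist p' p < \<delta> \<longrightarrow>
               dist ((\<lambda>(t, x). F t x) p') ((\<lambda>(t, x). F t x) p) < \<epsilon>"
        unfolding uniformly_continuous_on_def using ep by blast
      have uc: "\<forall>\<sigma>\<in>{0..1}. \<forall>a\<in>X. \<forall>b\<in>X. dist a b < \<delta> \<longrightarrow> dist (F \<sigma> a) (F \<sigma> b) < \<epsilon>"
      proof (intro ballI impI)
        fix \<sigma> a b assume "\<sigma> \<in> {(0::real)..1}" "a \<in> X" "b \<in> X" "dist a b < \<delta>"
        then show "dist (F \<sigma> a) (F \<sigma> b) < \<epsilon>"
          using dd[rule_format, of "(\<sigma>, b)" "(\<sigma>, a)"] by (simp add: dist_Pair_Pair)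
      qed
      from cr d have "conley_chain X F \<delta> 1 x y" by (simp add: conley_rel_def)
      then obtain N xs ts where N: "N \<ge> 1" "xs 0 = x" "xs N = y" "\<forall>i\<le>N. xs i \<in> X"
        "\<forall>i<N. ts i \<ge> 1 \<and> dist (F (ts i) (xs i)) (xs (Suc i)) < \<delta>"
        unfolding conley_chain_def by blast
      from chain_to_curve[OF assms(2) ep uc, rule_format, of N xs ts] N
      obtain T \<gamma> S where "T \<ge> real N" "pc X T \<gamma> S" "eps_close F \<epsilon> T \<gamma>" "\<gamma> 0 = x" "\<gamma> T = y"
        by blast
      then show "shadow_chain X F \<epsilon> x y" unfolding shadow_chain_def
        using N(1) pc_imp by (metis of_nat_1 of_nat_mono order_trans)
    qed
  qed
  moreover have "chain_recurrent_set X F (conley_rel X F) \<subseteq> chain_recurrent_set X F (shadow_rel X F)"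
    using P1 unfolding chain_recurrent_set_def by blast
  ultimately show ?thesis by blast
qed

end
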